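(* Let $n\ge 1$ and consider the quadratic system $\mathbf{E}\dot{\mathbf{x}} = \mathbf{A}\mathbf{x} + \mathbf{H}(\mathbf{x}\otimes\mathbf{x})$ with $\mathbf{x}(t)\in\mathbb{R}^n$, where $\mathbf{E}\in\mathbb{R}^{n\times n}$ is nonsingular, $\mathbf{A}\in\mathbb{R}^{n\times n}$, and $\mathbf{H}\in\mathbb{R}^{n\times n^2}$ satisfies $\mathbf{H}(\mathbf{x}_1\otimes\mathbf{x}_2)=\mathbf{H}(\mathbf{x}_2\otimes\mathbf{x}_1)$ for all $\mathbf{x}_1,\mathbf{x}_2\in\mathbb{R}^n$. Let $\mathbf{A}$ be Hurwitz and let $\mathbf{P}\in\mathbb{R}^{n\times n}$ be a Lyapunov matrix, i.e., a symmetric positive definite matrix satisfying $\mathbf{A}^\top\mathbf{P}\mathbf{E}+\mathbf{E}^\top\mathbf{P}\mathbf{A}+\mathbf{Q}=\mathbf{0}$ for some positive definite $\mathbf{Q}=\mathbf{Q}_f^\top\mathbf{Q}_f$. Let $v(\mathbf{x})=\mathbf{x}^\top\mathbf{E}^\top\mathbf{P}\mathbf{E}\mathbf{x}$. Then $\mathbf{x}_e=\mathbf{0}$ is a locally stable equilibrium, and $\mathcal{D}(\rho)\subseteq\mathcal{A}(\mathbf{0})$ with $$\rho=\frac{\sigma_{\min}^2(\mathbf{Q}_f)}{2\,\|\mathbf{H}\|_2\sqrt{\|\mathbf{P}\|_2}},$$ i.e., $\mathcal{D}(\rho)$ is an estimate of the domain of attraction of $\mathbf{0}$.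
   Context: $\otimes$ denotes the Kronecker product and $\|\cdot\|_2$ the Euclidean vector norm / spectral (induced 2-) matrix norm. $\sigma_{\min}(\mathbf{Q}_f)$ denotes the smallest nonzero singular value of $\mathbf{Q}_f$. $\dot v(\mathbf{x})$ denotes the derivative of $v$ along trajectories of the system, $\dot v(\mathbf{x}) = \dot{\mathbf{x}}^\top\mathbf{E}^\top\mathbf{P}\mathbf{E}\mathbf{x}+\mathbf{x}^\top\mathbf{E}^\top\mathbf{P}\mathbf{E}\dot{\mathbf{x}}$ with $\dot{\mathbf{x}}=\mathbf{E}^{-1}(\mathbf{A}\mathbf{x}+\mathbf{H}(\mathbf{x}\otimes\mathbf{x}))$. For $\rho>0$, $\mathcal{D}(\rho)=\{\mathbf{x}\in\mathbb{R}^n : v(\mathbf{x})\le\rho^2,\ \dot v(\mathbf{x})<0\}$. Writing $\phi(\mathbf{x}_0,t)$ for the solution with initial condition $\mathbf{x}_0$, the domain of attraction of the equilibrium $\mathbf{0}$ is $\mathcal{A}(\mathbf{0})=\{\mathbf{x}_0 : \lim_{t\to\infty}\phi(\mathbf{x}_0,t)=\mathbf{0}\}$. *)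

theory Defs
  imports "HOL-Analysis.Analysis"
begin

text \<open>Kronecker product of two vectors in R^n, indexed by pairs (i,j)
  (corresponding to the flat index (i-1)n + j of R^(n^2)).\<close>
definition kron :: "real^'n \<Rightarrow> real^'n \<Rightarrow> real^('n \<times> 'n)" where
  "kron x y = (\<chi> p. x $ fst p * y $ snd p)"

definition spec_norm :: "real^'k^'m \<Rightarrow> real" where
  "spec_norm M = onorm (\<lambda>x. M *v x)"

definition symmetric_mat :: "real^'n^'n \<Rightarrow> bool" where
  "symmetric_mat M \<longleftrightarrow> transpose M = M"

definition pos_def :: "real^'n^'n \<Rightarrow> bool" where
  "pos_def M \<longleftrightarrow> symmetric_mat M \<and> (\<forall>x. x \<noteq> 0 \<longrightarrow> x \<bullet> (M *v x) > 0)"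

definition real_eigenvalue :: "real^'n^'n \<Rightarrow> real \<Rightarrow> bool" where
  "real_eigenvalue M l \<longleftrightarrow> (\<exists>v. v \<noteq> 0 \<and> M *v v = l *s v)"

definition hurwitz :: "real^'n^'n \<Rightarrow> bool" where
  "hurwitz A \<longleftrightarrow> (\<forall>(l::complex) (v::complex^'n). v \<noteq> 0 \<and>
      (\<chi> i j. complex_of_real (A $ i $ j)) *v v = l *s v \<longrightarrow> Re l < 0)"

text \<open>Singular values of Qf are the square roots of the eigenvalues of Qf^T Qf;
  sigma_min is the smallest nonzero one.\<close>
definition sigma_min :: "real^'n^'m \<Rightarrow> real" where
  "sigma_min Qf = Min {sqrt l | l. real_eigenvalue (transpose Qf ** Qf) l \<and> l \<noteq> 0}"

definition qrhs :: "real^'n^'n \<Rightarrow> real^'n^'n \<Rightarrow> real^('n\<times>'n)^'n \<Rightarrow> real^'n \<Rightarrow> real^'n" where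
  "qrhs E A H x = matrix_inv E *v (A *v x + H *v kron x x)"

definition is_solution :: "(real^'n \<Rightarrow> real^'n) \<Rightarrow> real^'n \<Rightarrow> (real \<Rightarrow> real^'n) \<Rightarrow> bool" where
  "is_solution f x0 \<phi> \<longleftrightarrow> \<phi> 0 = x0 \<and>
     (\<forall>t\<ge>0. (\<phi> has_vector_derivative f (\<phi> t)) (at t within {0..}))"

definition domain_of_attraction :: "(real^'n \<Rightarrow> real^'n) \<Rightarrow> (real^'n) set" where
  "domain_of_attraction f = {x0. (\<exists>\<phi>. is_solution f x0 \<phi>) \<and>
      (\<forall>\<phi>. is_solution f x0 \<phi> \<longrightarrow> (\<phi> \<longlongrightarrow> 0) at_top)}"

definition stable_equilibrium_0 :: "(real^'n \<Rightarrow> real^'n) \<Rightarrow> bool" where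
  "stable_equilibrium_0 f \<longleftrightarrow> f 0 = 0 \<and>
     (\<forall>\<epsilon>>0. \<exists>\<delta>>0. \<forall>x0. norm x0 < \<delta> \<longrightarrow>
        (\<exists>\<phi>. is_solution f x0 \<phi>) \<and>
        (\<forall>\<phi>. is_solution f x0 \<phi> \<longrightarrow> (\<forall>t\<ge>0. norm (\<phi> t) < \<epsilon>)))"

definition lyap_v :: "real^'n^'n \<Rightarrow> real^'n^'n \<Rightarrow> real^'n \<Rightarrow> real" where
  "lyap_v E P x = x \<bullet> ((transpose E ** P ** E) *v x)"

definition lyap_vdot :: "real^'n^'n \<Rightarrow> real^'n^'n \<Rightarrow> real^('n\<times>'n)^'n \<Rightarrow> real^'n^'n \<Rightarrow> real^'n \<Rightarrow> real" where
  "lyap_vdot E A H P x = (let xd = qrhs E A H x in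
      xd \<bullet> ((transpose E ** P ** E) *v x) + x \<bullet> ((transpose E ** P ** E) *v xd))"

definition D_set :: "real^'n^'n \<Rightarrow> real^'n^'n \<Rightarrow> real^('n\<times>'n)^'n \<Rightarrow> real^'n^'n \<Rightarrow> real \<Rightarrow> (real^'n) set" where
  "D_set E A H P \<rho> = {x. lyap_v E P x \<le> \<rho>\<^sup>2 \<and> lyap_vdot E A H P x < 0}"

end

theory Submission
  imports Defs "HOL-Real_Asymp.Real_Asymp"
begin


lemma inv_right: "invertible E \<Longrightarrow> E ** matrix_inv E = mat 1"
  unfolding invertible_def matrix_inv_def by (rule someI_ex[THEN conjunct1])
lemma inv_left: "invertible E \<Longrightarrow> matrix_inv E ** E = mat 1"
  unfolding invertible_def matrix_inv_def by (rule someI_ex[THEN conjunct2])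

lemma E_qrhs: "invertible E \<Longrightarrow> E *v qrhs E A H x = A *v x + H *v kron x x"
  unfolding qrhs_def by (simp add: matrix_vector_mul_assoc inv_right)

lemma E_inj0: "invertible E \<Longrightarrow> E *v x = 0 \<Longrightarrow> x = 0"
  by (metis inv_left matrix_vector_mul_assoc matrix_vector_mul_lid matrix_vector_mult_0_right)

lemma mv_norm: "norm (M *v x) \<le> spec_norm M * norm x" for M :: "real^'n^'m"
  unfolding spec_norm_def by (rule onorm[OF matrix_vector_mul_bounded_linear])

lemma spec_norm_nonneg: "spec_norm M \<ge> 0"
  unfolding spec_norm_def by (rule onorm_pos_le[OF matrix_vector_mul_bounded_linear])

lemma inner_transpose: "x \<bullet> (M *v y) = (transpose M *v x) \<bullet> y" for M :: "real^'n^'m"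
  unfolding inner_vec_def matrix_vector_mult_def transpose_def 
  by (simp add: sum_distrib_left sum_distrib_right) (subst sum.swap, simp add: mult_ac)

lemma sym_inner: "symmetric_mat M \<Longrightarrow> x \<bullet> (M *v y) = (M *v x) \<bullet> y" for M :: "real^'n^'n"
  using inner_transpose[of x M y] by (simp add: symmetric_mat_def)

lemma quad_le_norm: "x \<bullet> (M *v x) \<le> spec_norm M * (norm x)^2" for M :: "real^'n^'n"
proof -
  have "x \<bullet> (M *v x) \<le> norm x * norm (M *v x)" by (rule Cauchy_Schwarz_ineq2[THEN order_trans[OF abs_ge_self]])
  also have "\<dots> \<le> norm x * (spec_norm M * norm x)" by (simp add: mult_left_mono mv_norm)
  finally show ?thesis by (simp add: power2_eq_square ac_simps)
qed

lemma sum_pairs: "(\<Sum>p\<in>UNIV. (f::'a::finite\<Rightarrow>real) (fst p) * g (snd p)) = (\<Sum>i\<in>UNIV. \<Sum>j\<in>(UNIV::'b::finite set). f i * g j)"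
  by (subst UNIV_Times_UNIV[symmetric, where 'a='a and 'b='b]) (simp only: sum.cartesian_product' fst_conv snd_conv)

lemma kron_inner: "kron x y \<bullet> kron x y = (x \<bullet> x) * (y \<bullet> y)"
proof -
  have "kron x y \<bullet> kron x y = (\<Sum>p\<in>UNIV. (x$fst p * x$fst p) * (y$snd p * y$snd p))"
    unfolding inner_vec_def kron_def by (simp add: ac_simps)
  also have "\<dots> = (\<Sum>i\<in>UNIV. \<Sum>j\<in>UNIV. (x$i * x$i) * (y$j * y$j))"
    by (rule sum_pairs)
  also have "\<dots> = (x \<bullet> x) * (y \<bullet> y)"
    unfolding inner_vec_def by (simp add: sum_product)
  finally show ?thesis .
qed

lemma kron_norm: "norm (kron x y) = norm x * norm y"
  by (simp add: norm_eq_sqrt_inner kron_inner real_sqrt_mult)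

lemma kron_diff: "kron x x - kron y y = kron (x - y) x + kron y (x - y)"
  by (simp add: kron_def vec_eq_iff algebra_simps)



lemma quad_zero:
  fixes a b :: real
  assumes "\<And>s. a * s + b * s^2 \<ge> 0"
  shows "a = 0"
proof (rule ccontr)
  assume "a \<noteq> 0"
  define c where "c = \<bar>b\<bar> + 1"
  have c: "c > 0" "\<bar>b\<bar> < c" unfolding c_def by auto
  define s where "s = - a / c"
  have "a * s + b * s^2 = (b * a^2 - a^2 * c) / c^2"
    unfolding s_def using c by (simp add: field_simps power2_eq_square)
  also have "\<dots> < 0"
  proof -
    have "b * a^2 \<le> \<bar>b\<bar> * a^2" by (simp add: mult_right_mono)
    also have "\<dots> < c * a^2" using c \<open>a \<noteq> 0\<close> by (simp add: mult_strict_right_mono)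
    finally have "b * a^2 - a^2 * c < 0" by (simp add: algebra_simps)
    thus ?thesis using c by (simp add: divide_neg_pos)
  qed
  finally show False using assms[of s] by simp
qed

lemma exists_unit: "\<exists>u::real^'n. norm u = 1"
  by (metis norm_axis_1)

lemma rayleigh_min:
  fixes M :: "real^'n^'n"
  assumes sym: "symmetric_mat M"
  shows "\<exists>u. norm u = 1 \<and> M *v u = (u \<bullet> (M *v u)) *s u \<and>
           (\<forall>x. (u \<bullet> (M *v u)) * (norm x)^2 \<le> x \<bullet> (M *v x))"
proof -
  have cont: "continuous_on (sphere 0 1) (\<lambda>x::real^'n. x \<bullet> (M *v x))"
    by (intro continuous_intros linear_continuous_on matrix_vector_mul_bounded_linear)
  obtain u where u: "u \<in> sphere 0 1" and umin: "\<And>y. y \<in> sphere 0 1 \<Longrightarrow> u \<bullet> (M *v u) \<le> y \<bullet> (M *v y)"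
    using continuous_attains_inf[OF compact_sphere _ cont] exists_unit
    by (metis dist_0_norm empty_iff mem_sphere)
  define m where "m = u \<bullet> (M *v u)"
  have nu: "norm u = 1" using u by simp
  have all: "m * (norm x)^2 \<le> x \<bullet> (M *v x)" for x
  proof (cases "x = 0")
    case True thus ?thesis by simp
  next
    case False
    define y where "y = (1 / norm x) *\<^sub>R x"
    have "y \<in> sphere 0 1" using False unfolding y_def by simp
    hence "m \<le> y \<bullet> (M *v y)" using umin m_def by blast
    also have "y \<bullet> (M *v y) = (x \<bullet> (M *v x)) / (norm x)^2"
      unfolding y_def by (simp add: matrix_vector_mult_scaleR power2_eq_square)
    finally show ?thesis using False by (simp add: field_simps)
  qed
  have eig: "M *v u = m *s u"
  proof -
    define w where "w = M *v u - m *\<^sub>R u"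
    have "w \<bullet> w = 0"
    proof -
      have "(2 * (w \<bullet> w)) * s + (w \<bullet> (M *v w) - m * (w \<bullet> w)) * s^2 \<ge> 0" for s
      proof -
        have "m * (norm (u + s *\<^sub>R w))^2 \<le> (u + s *\<^sub>R w) \<bullet> (M *v (u + s *\<^sub>R w))" by (rule all)
        moreover have "(norm (u + s *\<^sub>R w))^2 = 1 + 2 * s * (u \<bullet> w) + s^2 * (w \<bullet> w)"
        proof -
          have uu: "u \<bullet> u = 1" using nu by (simp add: norm_eq_sqrt_inner)
          show ?thesis by (simp only: power2_norm_eq_inner) (simp add: uu inner_add_left inner_add_right inner_commute power2_eq_square algebra_simps)
        qed
        moreover have "(u + s *\<^sub>R w) \<bullet> (M *v (u + s *\<^sub>R w)) = m + 2 * s * (w \<bullet> (M *v u)) + s^2 * (w \<bullet> (M *v w))"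
          using sym_inner[OF sym, of u w] unfolding m_def
          by (simp add: matrix_vector_mult_scaleR matrix_vector_right_distrib inner_add_left inner_add_right inner_commute power2_eq_square algebra_simps)
        moreover have "w \<bullet> (M *v u) = w \<bullet> w + m * (u \<bullet> w)"
          unfolding w_def by (simp add: inner_diff_left inner_diff_right inner_commute algebra_simps)
        ultimately show ?thesis by (simp add: algebra_simps power2_eq_square)
      qed
      from quad_zero[OF this] show ?thesis by simp
    qed
    hence "w = 0" by simp
    thus ?thesis unfolding w_def by (simp add: scalar_mult_eq_scaleR)
  qed
  show ?thesis using nu eig all m_def by blast
qed

lemma eigen_finite:
  fixes M :: "real^'n^'n"
  assumes sym: "symmetric_mat M"
  shows "finite {l. real_eigenvalue M l}"
proof -
  define S where "S = {l. real_eigenvalue M l}"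
  define f where "f l = (SOME v. v \<noteq> 0 \<and> M *v v = l *s v)" for l
  have fS: "f l \<noteq> 0 \<and> M *v f l = l *s f l" if "l \<in> S" for l
  proof -
    have "\<exists>v. v \<noteq> 0 \<and> M *v v = l *s v" using that unfolding S_def real_eigenvalue_def by simp
    from someI_ex[OF this] show ?thesis unfolding f_def .
  qed
  have inj: "inj_on f S"
  proof (rule inj_onI)
    fix l l' assume "l \<in> S" "l' \<in> S" "f l = f l'"
    hence "l *s f l = l' *s f l" "f l \<noteq> 0" using fS by metis+
    thus "l = l'" by (simp add: scalar_mult_eq_scaleR)
  qed
  have orth: "pairwise orthogonal (f ` S)"
  proof (clarsimp simp: pairwise_def)
    fix l l' assume a: "l \<in> S" "l' \<in> S" "f l \<noteq> f l'"
    hence "l \<noteq> l'" by auto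
    have "l * (f l \<bullet> f l') = (M *v f l) \<bullet> f l'" using fS[OF a(1)] by (simp add: scalar_mult_eq_scaleR)
    also have "\<dots> = f l \<bullet> (M *v f l')" using sym_inner[OF sym] by simp
    also have "\<dots> = l' * (f l \<bullet> f l')" using fS[OF a(2)] by (simp add: scalar_mult_eq_scaleR)
    finally show "orthogonal (f l) (f l')" using \<open>l \<noteq> l'\<close> unfolding orthogonal_def
      by (metis mult_right_cancel)
  qed
  have "0 \<notin> f ` S" using fS by auto
  hence "independent (f ` S)" using pairwise_orthogonal_independent orth by blast
  hence "finite (f ` S)" using independent_bound by blast
  thus ?thesis using finite_imageD inj S_def by blast
qed

lemma posdef_min:
  fixes M :: "real^'n^'n"
  assumes "pos_def M"
  shows "\<exists>m>0. real_eigenvalue M m \<and> (\<forall>x. m * (norm x)^2 \<le> x \<bullet> (M *v x))"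
proof -
  from assms have sym: "symmetric_mat M" unfolding pos_def_def by simp
  obtain u where u: "norm u = 1" "M *v u = (u \<bullet> (M *v u)) *s u" "\<forall>x. (u \<bullet> (M *v u)) * (norm x)^2 \<le> x \<bullet> (M *v x)"
    using rayleigh_min[OF sym] by blast
  have "u \<noteq> 0" using u by auto
  hence "u \<bullet> (M *v u) > 0" using assms unfolding pos_def_def by simp
  moreover have "real_eigenvalue M (u \<bullet> (M *v u))" unfolding real_eigenvalue_def using u \<open>u \<noteq> 0\<close> by metis
  ultimately show ?thesis using u by blast
qed

lemma posdef_eig_pos:
  fixes M :: "real^'n^'n"
  assumes "pos_def M" "real_eigenvalue M l"
  shows "l > 0"
proof -
  obtain v where v: "v \<noteq> 0" "M *v v = l *s v" using assms(2) unfolding real_eigenvalue_def by blast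
  have "0 < v \<bullet> (M *v v)" using assms(1) v(1) unfolding pos_def_def by blast
  also have "\<dots> = l * (v \<bullet> v)" using v by (simp add: scalar_mult_eq_scaleR)
  finally have "0 < l * (v \<bullet> v)" .
  moreover have "v \<bullet> v \<ge> 0" by simp
  ultimately show ?thesis using zero_less_mult_pos2 by (metis le_less_linear mult_nonpos_nonneg not_less)
qed

lemma sigma_bound:
  fixes Qf :: "real^'n^'m"
  assumes pd: "pos_def (transpose Qf ** Qf)"
  shows "sigma_min Qf \<ge> 0 \<and> (\<forall>x. (sigma_min Qf)^2 * (norm x)^2 \<le> x \<bullet> ((transpose Qf ** Qf) *v x))"
proof -
  define Q where "Q = transpose Qf ** Qf"
  obtain m where m: "m > 0" "real_eigenvalue Q m" "\<forall>x. m * (norm x)^2 \<le> x \<bullet> (Q *v x)"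
    using posdef_min[OF pd] Q_def by blast
  define S where "S = {sqrt l | l. real_eigenvalue Q l \<and> l \<noteq> 0}"
  have S: "S = sqrt ` {l. real_eigenvalue Q l \<and> l \<noteq> 0}" unfolding S_def by auto
  have "finite S" unfolding S using eigen_finite[of Q] pd Q_def unfolding pos_def_def by auto
  have inS: "sqrt m \<in> S" unfolding S_def using m by auto
  have sig: "sigma_min Qf = Min S" unfolding sigma_min_def S_def Q_def by simp
  have le: "Min S \<le> sqrt m" using \<open>finite S\<close> inS by simp
  have "Min S \<in> S" using \<open>finite S\<close> inS Min_in by blast
  hence ge: "Min S \<ge> 0" unfolding S_def using posdef_eig_pos[OF pd] Q_def by (auto intro: less_imp_le)
  have "(Min S)^2 \<le> m" using le ge m(1) by (metis real_sqrt_le_iff real_sqrt_unique sqrt_le_D)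
  hence "(Min S)^2 * (norm x)^2 \<le> x \<bullet> (Q *v x)" for x
    using m(3) by (meson mult_right_mono order_trans zero_le_power2)
  thus ?thesis using sig ge Q_def by simp
qed

lemma P_cauchy:
  fixes P :: "real^'n^'n"
  assumes pd: "pos_def P"
  shows "(h \<bullet> (P *v y))^2 \<le> (h \<bullet> (P *v h)) * (y \<bullet> (P *v y))"
proof -
  have sym: "symmetric_mat P" using pd unfolding pos_def_def by simp
  have nn: "z \<bullet> (P *v z) \<ge> 0" for z using pd unfolding pos_def_def
    by (cases "z = 0") (auto intro: less_imp_le)
  define a b c where "a = h \<bullet> (P *v h)" "b = h \<bullet> (P *v y)" "c = y \<bullet> (P *v y)"
  have expand: "(h + s *\<^sub>R y) \<bullet> (P *v (h + s *\<^sub>R y)) = a + 2 * s * b + s^2 * c" for s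
    using sym_inner[OF sym, of y h] unfolding a_b_c_def
    by (simp add: matrix_vector_mult_scaleR matrix_vector_right_distrib inner_add_left inner_add_right inner_commute power2_eq_square algebra_simps)
  show ?thesis
  proof (cases "y = 0")
    case True thus ?thesis by simp
  next
    case False
    hence c: "c > 0" using pd unfolding pos_def_def a_b_c_def by simp
    have "0 \<le> a + 2 * (- b / c) * b + (- b / c)^2 * c" using nn[of "h + (- b / c) *\<^sub>R y"] unfolding expand .
    also have "\<dots> = a - b^2 / c" using c by (simp add: field_simps power2_eq_square)
    finally have "b^2 \<le> a * c" using c by (simp add: field_simps)
    thus ?thesis unfolding a_b_c_def .
  qed
qed



lemma inner_transpose': "x \<bullet> (w v* E) = (E *v x) \<bullet> w" for E :: "real^'n^'m"
proof -
  have "x \<bullet> (w v* E) = (w v* E) \<bullet> x" by (rule inner_commute)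
  also have "\<dots> = w \<bullet> (E *v x)" by (rule dot_lmul_matrix)
  also have "\<dots> = (E *v x) \<bullet> w" by (rule inner_commute)
  finally show ?thesis .
qed

lemma v_eq: "lyap_v E P x = (E *v x) \<bullet> (P *v (E *v x))"
  unfolding lyap_v_def by (simp add: matrix_vector_mul_assoc[symmetric] inner_transpose')

lemma vdot_eq:
  fixes E A P :: "real^'n^'n" and H :: "real^('n\<times>'n)^'n" and Qf :: "real^'n^'m"
  assumes E: "invertible E" and sym: "symmetric_mat P"
    and ly: "transpose A ** P ** E + transpose E ** P ** A + transpose Qf ** Qf = 0"
  shows "lyap_vdot E A H P x = - (x \<bullet> ((transpose Qf ** Qf) *v x)) + 2 * ((H *v kron x x) \<bullet> (P *v (E *v x)))"
proof -
  define xd where "xd = qrhs E A H x"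
  define h where "h = H *v kron x x"
  have z: "E *v xd = A *v x + h" unfolding xd_def h_def by (rule E_qrhs[OF E])
  have 1: "xd \<bullet> ((transpose E ** P ** E) *v x) = (A *v x + h) \<bullet> (P *v (E *v x))"
    by (simp add: matrix_vector_mul_assoc[symmetric] inner_transpose' z)
  have 2: "x \<bullet> ((transpose E ** P ** E) *v xd) = (A *v x + h) \<bullet> (P *v (E *v x))"
    by (simp add: matrix_vector_mul_assoc[symmetric] inner_transpose' z sym_inner[OF sym] inner_commute)
  have "x \<bullet> ((transpose A ** P ** E + transpose E ** P ** A + transpose Qf ** Qf) *v x) = 0"
    using ly by simp
  hence 3: "2 * ((A *v x) \<bullet> (P *v (E *v x))) + x \<bullet> ((transpose Qf ** Qf) *v x) = 0"
    by (simp add: matrix_vector_mult_add_rdistrib inner_add_right matrix_vector_mul_assoc[symmetric]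
        inner_transpose' sym_inner[OF sym, of "E *v x"] inner_commute)
  show ?thesis unfolding lyap_vdot_def Let_def xd_def[symmetric] 1 2 h_def[symmetric]
    using 3 by (simp add: inner_add_left)
qed

lemma vdot_bound:
  fixes E A P :: "real^'n^'n" and H :: "real^('n\<times>'n)^'n" and Qf :: "real^'n^'m"
  assumes E: "invertible E" and pd: "pos_def P"
    and ly: "transpose A ** P ** E + transpose E ** P ** A + transpose Qf ** Qf = 0"
  shows "lyap_vdot E A H P x \<le> - (x \<bullet> ((transpose Qf ** Qf) *v x))
      + 2 * sqrt (spec_norm P) * spec_norm H * (norm x)^2 * sqrt (lyap_v E P x)"
proof -
  have sym: "symmetric_mat P" using pd unfolding pos_def_def by simp
  define h where "h = H *v kron x x"
  define y where "y = E *v x"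
  have ynn: "0 \<le> y \<bullet> (P *v y)" using pd unfolding pos_def_def by (cases "y = 0") (auto intro: less_imp_le)
  have "(h \<bullet> (P *v y))^2 \<le> (h \<bullet> (P *v h)) * (y \<bullet> (P *v y))" by (rule P_cauchy[OF pd])
  also have "\<dots> \<le> (spec_norm P * (norm h)^2) * (y \<bullet> (P *v y))"
    by (rule mult_right_mono[OF quad_le_norm ynn])
  finally have sq: "(h \<bullet> (P *v y))^2 \<le> (sqrt (spec_norm P) * norm h * sqrt (y \<bullet> (P *v y)))^2"
    using spec_norm_nonneg[of P] ynn
    by (simp add: power_mult_distrib)
  have "h \<bullet> (P *v y) \<le> \<bar>h \<bullet> (P *v y)\<bar>" by simp
  also have "\<dots> \<le> sqrt (spec_norm P) * norm h * sqrt (y \<bullet> (P *v y))"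
  proof -
    have r: "0 \<le> sqrt (spec_norm P) * norm h * sqrt (y \<bullet> (P *v y))"
      using spec_norm_nonneg[of P] ynn by simp
    have "\<bar>h \<bullet> (P *v y)\<bar> \<le> \<bar>sqrt (spec_norm P) * norm h * sqrt (y \<bullet> (P *v y))\<bar>"
      using sq by (simp only: abs_le_square_iff)
    thus ?thesis using r by simp
  qed
  also have "\<dots> \<le> sqrt (spec_norm P) * (spec_norm H * (norm x)^2) * sqrt (y \<bullet> (P *v y))"
  proof -
    have "norm h \<le> spec_norm H * norm (kron x x)" unfolding h_def by (rule mv_norm)
    also have "\<dots> = spec_norm H * (norm x)^2" by (simp add: kron_norm power2_eq_square)
    finally show ?thesis using spec_norm_nonneg[of P] ynn by (intro mult_right_mono mult_left_mono) auto
  qed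
  finally have "h \<bullet> (P *v y) \<le> sqrt (spec_norm P) * spec_norm H * (norm x)^2 * sqrt (lyap_v E P x)"
    by (simp add: v_eq y_def ac_simps)
  thus ?thesis using vdot_eq[OF E sym ly, of H x] unfolding h_def y_def by simp
qed



lemma M_posdef:
  fixes E P :: "real^'n^'n"
  assumes E: "invertible E" and pd: "pos_def P"
  shows "pos_def (transpose E ** P ** E)"
proof -
  have sym: "transpose P = P" using pd unfolding pos_def_def symmetric_mat_def by simp
  have "transpose (transpose E ** P ** E) = transpose E ** P ** E"
    by (simp add: matrix_transpose_mul sym matrix_mul_assoc)
  moreover have "x \<bullet> ((transpose E ** P ** E) *v x) > 0" if "x \<noteq> 0" for x
  proof -
    have "E *v x \<noteq> 0" using E_inj0[OF E] that by blast
    hence "(E *v x) \<bullet> (P *v (E *v x)) > 0" using pd unfolding pos_def_def by blast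
    thus ?thesis using v_eq[of E P x] unfolding lyap_v_def by simp
  qed
  ultimately show ?thesis unfolding pos_def_def symmetric_mat_def by blast
qed

lemma v_bounds:
  fixes E P :: "real^'n^'n"
  assumes E: "invertible E" and pd: "pos_def P"
  shows "\<exists>lam>0. \<exists>C>0. \<forall>x. lam * (norm x)^2 \<le> lyap_v E P x \<and> lyap_v E P x \<le> C * (norm x)^2"
proof -
  obtain lam where lam: "lam > 0" "\<forall>x. lam * (norm x)^2 \<le> x \<bullet> ((transpose E ** P ** E) *v x)"
    using posdef_min[OF M_posdef[OF E pd]] by blast
  define C where "C = spec_norm (transpose E ** P ** E) + 1"
  have C: "C > 0" unfolding C_def using spec_norm_nonneg[of "transpose E ** P ** E"] by simp
  have "lyap_v E P x \<le> C * (norm x)^2" for x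
  proof -
    have "lyap_v E P x \<le> spec_norm (transpose E ** P ** E) * (norm x)^2"
      unfolding lyap_v_def by (rule quad_le_norm)
    also have "\<dots> \<le> C * (norm x)^2" unfolding C_def by (simp add: algebra_simps)
    finally show ?thesis .
  qed
  thus ?thesis using lam C unfolding lyap_v_def by blast
qed

lemma F_lipschitz:
  fixes E A :: "real^'n^'n" and H :: "real^('n\<times>'n)^'n"
  assumes "R \<ge> 0"
  shows "\<exists>L>0. \<forall>x\<in>cball 0 R. \<forall>y\<in>cball 0 R. norm (qrhs E A H x - qrhs E A H y) \<le> L * norm (x - y)"
proof -
  define L where "L = spec_norm (matrix_inv E) * (spec_norm A + 2 * R * spec_norm H) + 1"
  have nn: "0 \<le> spec_norm (matrix_inv E)" "0 \<le> spec_norm A" "0 \<le> spec_norm H"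
    by (rule spec_norm_nonneg)+
  have L: "L > 0" unfolding L_def using nn assms by (intro add_nonneg_pos mult_nonneg_nonneg add_nonneg_nonneg) auto
  have "norm (qrhs E A H x - qrhs E A H y) \<le> L * norm (x - y)" if x: "norm x \<le> R" and y: "norm y \<le> R" for x y
  proof -
    have eq: "qrhs E A H x - qrhs E A H y = matrix_inv E *v (A *v (x - y) + (H *v kron (x - y) x + H *v kron y (x - y)))"
    proof -
      have "A *v (x - y) + (H *v kron (x - y) x + H *v kron y (x - y)) = (A *v x + H *v kron x x) - (A *v y + H *v kron y y)"
        unfolding matrix_vector_right_distrib[symmetric] kron_diff[symmetric] by (simp add: matrix_vector_mult_diff_distrib)
      thus ?thesis unfolding qrhs_def by (simp only: matrix_vector_mult_diff_distrib)
    qed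
    have k: "norm (H *v kron (x - y) x + H *v kron y (x - y)) \<le> 2 * R * spec_norm H * norm (x - y)"
    proof -
      have "norm (H *v kron (x - y) x + H *v kron y (x - y)) \<le> norm (H *v kron (x - y) x) + norm (H *v kron y (x - y))"
        by (rule norm_triangle_ineq)
      also have "\<dots> \<le> spec_norm H * norm (kron (x - y) x) + spec_norm H * norm (kron y (x - y))"
        by (intro add_mono mv_norm)
      also have "\<dots> = spec_norm H * norm (x - y) * (norm x + norm y)"
        by (simp add: kron_norm algebra_simps)
      also have "\<dots> \<le> spec_norm H * norm (x - y) * (2 * R)"
        using x y nn by (intro mult_left_mono) auto
      finally show ?thesis by (simp add: ac_simps)
    qed
    have "norm (qrhs E A H x - qrhs E A H y) \<le> spec_norm (matrix_inv E) * norm (A *v (x - y) + (H *v kron (x - y) x + H *v kron y (x - y)))"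
      unfolding eq by (rule mv_norm)
    also have "\<dots> \<le> spec_norm (matrix_inv E) * (spec_norm A * norm (x - y) + 2 * R * spec_norm H * norm (x - y))"
      using nn by (intro mult_left_mono order_trans[OF norm_triangle_ineq] add_mono mv_norm k) auto
    also have "\<dots> \<le> L * norm (x - y)"
      unfolding L_def by (simp add: algebra_simps)
    finally show ?thesis .
  qed
  thus ?thesis using L by auto
qed

lemma v_deriv:
  fixes E P :: "real^'n^'n"
  assumes "(\<phi> has_vector_derivative \<phi>') (at t within S)"
  shows "((\<lambda>t. lyap_v E P (\<phi> t)) has_real_derivative
     (\<phi>' \<bullet> ((transpose E ** P ** E) *v \<phi> t) + \<phi> t \<bullet> ((transpose E ** P ** E) *v \<phi>'))) (at t within S)"
proof -
  define M where "M = transpose E ** P ** E"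
  have d1: "(\<phi> has_derivative (\<lambda>h. h *\<^sub>R \<phi>')) (at t within S)"
    using assms by (simp add: has_vector_derivative_def)
  have d2: "((\<lambda>t. M *v \<phi> t) has_derivative (\<lambda>h. M *v (h *\<^sub>R \<phi>'))) (at t within S)"
    by (rule bounded_linear.has_derivative[OF matrix_vector_mul_bounded_linear d1])
  have "((\<lambda>t. \<phi> t \<bullet> (M *v \<phi> t)) has_derivative (\<lambda>h. \<phi> t \<bullet> (M *v (h *\<^sub>R \<phi>')) + (h *\<^sub>R \<phi>') \<bullet> (M *v \<phi> t))) (at t within S)"
    by (rule has_derivative_inner[OF d1 d2])
  moreover have "(\<lambda>h. \<phi> t \<bullet> (M *v (h *\<^sub>R \<phi>')) + (h *\<^sub>R \<phi>') \<bullet> (M *v \<phi> t)) = (*) (\<phi>' \<bullet> (M *v \<phi> t) + \<phi> t \<bullet> (M *v \<phi>'))"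
    by (rule ext) (simp add: matrix_vector_mult_scaleR algebra_simps)
  ultimately show ?thesis unfolding has_field_derivative_def lyap_v_def M_def by simp
qed

lemma v_deriv_sol:
  fixes E A P :: "real^'n^'n" and H :: "real^('n\<times>'n)^'n"
  assumes "(\<phi> has_vector_derivative qrhs E A H (\<phi> t)) (at t within S)"
  shows "((\<lambda>t. lyap_v E P (\<phi> t)) has_real_derivative lyap_vdot E A H P (\<phi> t)) (at t within S)"
  using v_deriv[OF assms, of E P] unfolding lyap_vdot_def Let_def .



lemma exp_int:
  fixes k u :: real
  assumes "k > 0" "u \<ge> 0"
  shows "((\<lambda>s. exp (k * s)) has_integral (exp (k * u) - 1) / k) {0..u}"
proof -
  have "((\<lambda>s. exp (k * s)) has_integral ((\<lambda>s. exp (k * s) / k) u - (\<lambda>s. exp (k * s) / k) 0)) {0..u}"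
  proof (rule fundamental_theorem_of_calculus[OF assms(2)])
    fix x :: real
    have "((\<lambda>s. exp (k * s) / k) has_real_derivative exp (k * x)) (at x within {0..u})"
      using assms(1) by (auto intro!: derivative_eq_intros)
    thus "((\<lambda>s. exp (k * s) / k) has_vector_derivative exp (k * x)) (at x within {0..u})"
      by (simp add: has_real_derivative_iff_has_vector_derivative)
  qed
  thus ?thesis by (simp add: diff_divide_distrib)
qed

lemma ue_bound:
  fixes k u :: real
  assumes "k > 0" "u \<ge> 0"
  shows "u * exp (- k * u) \<le> 1 / k"
proof -
  have "1 + k * u \<le> exp (k * u)" by (rule exp_ge_add_one_self)
  hence "k * u \<le> exp (k * u)" by linarith
  hence "u \<le> exp (k * u) / k" using assms by (simp add: field_simps)
  hence "u * exp (- k * u) \<le> exp (k * u) / k * exp (- k * u)" by (rule mult_right_mono) simp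
  also have "\<dots> = 1 / k" by (simp add: exp_minus field_simps)
  finally show ?thesis .
qed

lemma int_cont:
  fixes f :: "real \<Rightarrow> 'a::banach"
  assumes "continuous_on UNIV f"
  shows "continuous_on UNIV (\<lambda>t. integral {0..max 0 t} f)"
proof -
  have "isCont (\<lambda>t. integral {0..max 0 t} f) t0" for t0
  proof -
    define b where "b = \<bar>t0\<bar> + 1"
    have "continuous_on {0..b} (\<lambda>u. integral {0..u} f)"
      by (rule indefinite_integral_continuous_1[OF integrable_continuous_real]) (rule continuous_on_subset[OF assms], simp)
    hence "continuous_on {-b<..<b} (\<lambda>t. integral {0..max 0 t} f)"
      by (rule continuous_on_compose2[where f="\<lambda>t. max 0 t"]) (auto intro!: continuous_intros)
    moreover have "t0 \<in> {-b<..<b}" unfolding b_def by auto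
    ultimately show ?thesis by (simp add: continuous_on_eq_continuous_at)
  qed
  thus ?thesis by (simp add: continuous_at_imp_continuous_on)
qed



lemma int_affine_exp:
  fixes k u a b :: real
  assumes "k > 0" "u \<ge> 0"
  shows "integral {0..u} (\<lambda>s. a + b * exp (k * s)) = a * u + b * ((exp (k * u) - 1) / k)"
proof -
  have c: "((\<lambda>s. a) has_integral a * u) {0..u}" using has_integral_const_real[of a 0 u] assms by (simp add: mult.commute)
  have "((\<lambda>s. a + b * exp (k * s)) has_integral (a * u + b * ((exp (k * u) - 1) / k))) {0..u}"
    by (intro has_integral_add c has_integral_mult_right exp_int assms)
  thus ?thesis using assms by (simp add: integral_unique)
qed

lemma aux_exp_id:
  fixes e E a b c u k :: real
  assumes "e * E = 1"
  shows "e * (a + (b * u + c * ((E - 1) / k))) = e * a + b * (u * e) + c * ((1 - e) / k)"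
proof -
  have 1: "e * (E - 1) = 1 - e" using assms by (simp add: right_diff_distrib)
  have "e * (c * ((E - 1) / k)) = c * ((e * (E - 1)) / k)" by simp
  also have "\<dots> = c * ((1 - e) / k)" by (simp only: 1)
  finally have 2: "e * (c * ((E - 1) / k)) = c * ((1 - e) / k)" .
  have "e * (a + (b * u + c * ((E - 1) / k))) = e * a + b * (u * e) + e * (c * ((E - 1) / k))"
    by (simp add: distrib_left mult.commute mult.left_commute)
  thus ?thesis by (simp only: 2)
qed

lemma picard:
  fixes G :: "real^'n \<Rightarrow> real^'n" and x0 :: "real^'n"
  assumes L: "L > 0" and lip: "\<And>x y. norm (G x - G y) \<le> L * norm (x - y)"
  shows "\<exists>\<phi>. is_solution G x0 \<phi>"
proof -
  define k where "k = 2 * L"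
  have k: "k > 0" using L k_def by simp
  have contG: "continuous_on UNIV G"
    using lipschitz_on_continuous_on[of L UNIV G] L lip unfolding lipschitz_on_def dist_norm by auto
  have Gb: "norm (G z) \<le> norm (G 0) + L * norm z" for z
  proof -
    have "norm (G z) \<le> norm (G 0) + norm (G z - G 0)" by (rule norm_triangle_sub)
    also have "\<dots> \<le> norm (G 0) + L * norm z" using lip[of z 0] by simp
    finally show ?thesis .
  qed
  define fy where "fy y s = G (exp (k * s) *\<^sub>R apply_bcontfun y s)" for y :: "real \<Rightarrow>\<^sub>C (real^'n)" and s
  have cfy: "continuous_on UNIV (fy y)" for y
    unfolding fy_def
    by (rule continuous_on_compose2[OF contG]) (auto intro!: continuous_intros continuous_on_apply_bcontfun)
  have intg: "fy y integrable_on {0..u}" for y u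
    by (rule integrable_continuous_real, rule continuous_on_subset[OF cfy]) simp
  define Tf where "Tf y t = exp (- k * max 0 t) *\<^sub>R (x0 + integral {0..max 0 t} (fy y))" for y t
  have Tb: "Tf y \<in> bcontfun" for y
  proof (rule bcontfun_normI[where b="norm x0 + norm (G 0) / k + L * norm y / k"])
    show "continuous_on UNIV (Tf y)" unfolding Tf_def by (intro continuous_intros int_cont cfy)
    fix t :: real
    define u where "u = max 0 t"
    have u: "u \<ge> 0" by (simp add: u_def max_def)
    have "norm (integral {0..u} (fy y)) \<le> integral {0..u} (\<lambda>s. norm (G 0) + (L * norm y) * exp (k * s))"
    proof (rule integral_norm_bound_integral[OF intg])
      show "(\<lambda>s. norm (G 0) + (L * norm y) * exp (k * s)) integrable_on {0..u}"
        by (intro integrable_continuous_real continuous_intros)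
      fix s assume "s \<in> {0..u}"
      have "norm (fy y s) \<le> norm (G 0) + L * norm (exp (k * s) *\<^sub>R apply_bcontfun y s)" unfolding fy_def by (rule Gb)
      also have "\<dots> \<le> norm (G 0) + (L * norm y) * exp (k * s)"
        using norm_bounded[of y s] L by (simp add: mult_left_mono)
      finally show "norm (fy y s) \<le> norm (G 0) + (L * norm y) * exp (k * s)" .
    qed
    also have "\<dots> = norm (G 0) * u + (L * norm y) * ((exp (k * u) - 1) / k)"
      by (rule int_affine_exp[OF k u])
    finally have nI: "norm (integral {0..u} (fy y)) \<le> norm (G 0) * u + (L * norm y) * ((exp (k * u) - 1) / k)" .
    have "norm (Tf y t) = exp (- k * u) * norm (x0 + integral {0..u} (fy y))" unfolding Tf_def u_def by simp
    also have "\<dots> \<le> exp (- k * u) * (norm x0 + (norm (G 0) * u + (L * norm y) * ((exp (k * u) - 1) / k)))"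
      by (intro mult_left_mono order_trans[OF norm_triangle_ineq] add_left_mono nI) auto
    also have "\<dots> = exp (- k * u) * norm x0 + norm (G 0) * (u * exp (- k * u)) + (L * norm y) * ((1 - exp (- k * u)) / k)"
      by (rule aux_exp_id) (simp add: exp_minus_inverse mult.commute)
    also have "\<dots> \<le> norm x0 + norm (G 0) * (1 / k) + (L * norm y) * (1 / k)"
    proof (intro add_mono mult_left_mono)
      show "exp (- k * u) * norm x0 \<le> norm x0" using k u by (intro mult_left_le_one_le) auto
      show "u * exp (- k * u) \<le> 1 / k" by (rule ue_bound[OF k u])
      show "(1 - exp (- k * u)) / k \<le> 1 / k" using k by (simp add: divide_right_mono)
    qed (use L in auto)
    finally show "norm (Tf y t) \<le> norm x0 + norm (G 0) / k + L * norm y / k" by simp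
  qed
  define \<Psi> where "\<Psi> y = Bcontfun (Tf y)" for y
  have a\<Psi>: "apply_bcontfun (\<Psi> y) = Tf y" for y unfolding \<Psi>_def using Tb by (simp add: Bcontfun_inverse)
  have contr: "dist (\<Psi> y) (\<Psi> z) \<le> (1/2) * dist y z" for y z
  proof (rule dist_bound)
    fix t :: real
    define u where "u = max 0 t"
    have u: "u \<ge> 0" by (simp add: u_def max_def)
    define d where "d = dist y z"
    have "norm (integral {0..u} (fy y) - integral {0..u} (fy z)) = norm (integral {0..u} (\<lambda>s. fy y s - fy z s))"
      by (simp add: integral_diff intg)
    also have "\<dots> \<le> integral {0..u} (\<lambda>s. 0 + (L * d) * exp (k * s))"
    proof (rule integral_norm_bound_integral)
      show "(\<lambda>s. fy y s - fy z s) integrable_on {0..u}" by (intro integrable_diff intg)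
      show "(\<lambda>s. 0 + (L * d) * exp (k * s)) integrable_on {0..u}"
        by (intro integrable_continuous_real continuous_intros)
      fix s assume "s \<in> {0..u}"
      have "norm (fy y s - fy z s) \<le> L * norm (exp (k * s) *\<^sub>R apply_bcontfun y s - exp (k * s) *\<^sub>R apply_bcontfun z s)"
        unfolding fy_def by (rule lip)
      also have "\<dots> = L * exp (k * s) * dist (apply_bcontfun y s) (apply_bcontfun z s)"
        by (simp add: dist_norm scaleR_diff_right[symmetric])
      also have "\<dots> \<le> L * exp (k * s) * d"
        unfolding d_def using L by (intro mult_left_mono dist_bounded) auto
      finally show "norm (fy y s - fy z s) \<le> 0 + (L * d) * exp (k * s)" by (simp add: ac_simps)
    qed
    also have "\<dots> = 0 * u + (L * d) * ((exp (k * u) - 1) / k)" by (rule int_affine_exp[OF k u])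
    finally have nI: "norm (integral {0..u} (fy y) - integral {0..u} (fy z)) \<le> (L * d) * ((exp (k * u) - 1) / k)" by simp
    have "dist (apply_bcontfun (\<Psi> y) t) (apply_bcontfun (\<Psi> z) t) = exp (- k * u) * norm (integral {0..u} (fy y) - integral {0..u} (fy z))"
      unfolding a\<Psi> Tf_def u_def dist_norm by (simp add: scaleR_diff_right[symmetric])
    also have "\<dots> \<le> exp (- k * u) * ((L * d) * ((exp (k * u) - 1) / k))"
      by (intro mult_left_mono nI) auto
    also have "\<dots> = (L * d) * ((1 - exp (- k * u)) / k)"
      using aux_exp_id[of "exp (- k * u)" "exp (k * u)" 0 0 u "L * d" k] by (simp add: exp_minus_inverse mult.commute)
    also have "\<dots> \<le> (L * d) * (1 / k)"
      using k L unfolding d_def by (intro mult_left_mono divide_right_mono) auto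
    also have "\<dots> = (1/2) * dist y z" unfolding k_def d_def using L by simp
    finally show "dist (apply_bcontfun (\<Psi> y) t) (apply_bcontfun (\<Psi> z) t) \<le> (1/2) * dist y z" .
  qed
  obtain y where fixy: "\<Psi> y = y" using banach_fix_type[of "1/2" \<Psi>] contr by auto
  define \<phi> where "\<phi> t = exp (k * max 0 t) *\<^sub>R apply_bcontfun y t" for t
  have phi_eq: "\<phi> t = x0 + integral {0..max 0 t} (\<lambda>s. G (\<phi> s))" for t
  proof -
    have "apply_bcontfun y t = Tf y t" using a\<Psi> fixy by metis
    hence "\<phi> t = x0 + integral {0..max 0 t} (fy y)" unfolding \<phi>_def Tf_def
      by (simp add: exp_add[symmetric])
    moreover have "integral {0..max 0 t} (fy y) = integral {0..max 0 t} (\<lambda>s. G (\<phi> s))"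
      by (rule integral_cong) (auto simp: fy_def \<phi>_def)
    ultimately show ?thesis by simp
  qed
  have cphi: "continuous_on UNIV \<phi>" unfolding \<phi>_def
    by (intro continuous_intros continuous_on_apply_bcontfun)
  have cGphi: "continuous_on UNIV (\<lambda>s. G (\<phi> s))" by (rule continuous_on_compose2[OF contG cphi]) auto
  have "is_solution G x0 \<phi>"
    unfolding is_solution_def
  proof (intro conjI allI impI)
    have "max 0 (0::real) = 0" by simp
    thus "\<phi> 0 = x0" using phi_eq[of 0] by simp
    fix t :: real assume t: "t \<ge> 0"
    define b where "b = t + 1"
    have "((\<lambda>u. integral {0..u} (\<lambda>s. G (\<phi> s))) has_vector_derivative G (\<phi> t)) (at t within {0..b})"
      by (rule integral_has_vector_derivative) (auto intro: continuous_on_subset[OF cGphi] simp: b_def t)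
    hence "((\<lambda>u. x0 + integral {0..u} (\<lambda>s. G (\<phi> s))) has_vector_derivative 0 + G (\<phi> t)) (at t within {0..b})"
      by (intro has_vector_derivative_add has_vector_derivative_const)
    moreover have "at t within {0..b} = at t within {0..}"
      by (rule at_within_nhd[of t "{..<b}"]) (auto simp: b_def)
    ultimately have d: "((\<lambda>u. x0 + integral {0..u} (\<lambda>s. G (\<phi> s))) has_vector_derivative G (\<phi> t)) (at t within {0..})"
      by simp
    show "(\<phi> has_vector_derivative G (\<phi> t)) (at t within {0..})"
    proof (rule has_vector_derivative_transform_within[OF d, of 1])
      fix x' :: real assume "x' \<in> {0..}"
      hence "max 0 x' = x'" by simp
      thus "x0 + integral {0..x'} (\<lambda>s. G (\<phi> s)) = \<phi> x'" using phi_eq[of x'] by simp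
    qed (use t in auto)
  qed
  thus ?thesis by blast
qed



lemma inv_lemma:
  fixes g :: "real \<Rightarrow> real"
  assumes cont: "continuous_on {0..} g"
    and der: "\<And>t. t > 0 \<Longrightarrow> g t < K \<Longrightarrow> \<exists>d. DERIV g t :> d \<and> d \<le> 0"
    and t1: "0 \<le> t1" "g t1 < K"
  shows "\<forall>t\<ge>t1. g t \<le> g t1"
proof (rule ccontr)
  assume "\<not> ?thesis"
  then obtain t2 where t2: "t2 \<ge> t1" "g t2 > g t1" by (auto simp: not_le)
  define m where "m = min (g t2) ((g t1 + K)/2)"
  have m: "g t1 < m" "m < K" "m \<le> g t2" using t1 t2 unfolding m_def by (auto simp: min_def)
  define Z where "Z = {t1..t2} \<inter> g -` {m..}"
  have cI: "continuous_on {t1..t2} g" by (rule continuous_on_subset[OF cont]) (use t1 in auto)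
  have "closed Z" unfolding Z_def by (rule continuous_closed_preimage[OF cI]) auto
  have t2Z: "t2 \<in> Z" unfolding Z_def using t2 m by auto
  have bdd: "bdd_below Z" unfolding Z_def by (rule bdd_belowI[of _ t1]) auto
  define \<tau> where "\<tau> = Inf Z"
  have \<tau>Z: "\<tau> \<in> Z" unfolding \<tau>_def using closed_contains_Inf[OF _ bdd \<open>closed Z\<close>] t2Z by blast
  hence \<tau>: "t1 \<le> \<tau>" "\<tau> \<le> t2" "g \<tau> \<ge> m" unfolding Z_def by auto
  have below: "g s < m" if "t1 \<le> s" "s < \<tau>" for s
  proof (rule ccontr)
    assume "\<not> g s < m"
    hence "s \<in> Z" unfolding Z_def using that \<tau> by auto
    hence "\<tau> \<le> s" unfolding \<tau>_def using bdd by (simp add: cInf_lower)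
    thus False using that by simp
  qed
  have "g \<tau> \<le> g t1"
  proof (rule DERIV_nonpos_imp_decreasing_open[OF \<tau>(1)])
    fix x assume x: "t1 < x" "x < \<tau>"
    show "\<exists>y. DERIV g x :> y \<and> y \<le> 0"
      using der[of x] below[of x] x t1 m by auto
  next
    show "continuous_on {t1..\<tau>} g" by (rule continuous_on_subset[OF cont]) (use t1 in auto)
  qed
  thus False using \<tau>(3) m(1) by simp
qed

lemma exp_decay:
  fixes g :: "real \<Rightarrow> real"
  assumes cont: "continuous_on {t1..} g"
    and der: "\<And>t. t > t1 \<Longrightarrow> \<exists>d. DERIV g t :> d \<and> d \<le> - \<gamma> * g t"
    and t: "t \<ge> t1"
  shows "g t \<le> g t1 * exp (- \<gamma> * (t - t1))"
proof -
  define h where "h s = g s * exp (\<gamma> * s)" for s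
  have "h t \<le> h t1"
  proof (rule DERIV_nonpos_imp_decreasing_open[OF t])
    fix x assume x: "t1 < x" "x < t"
    obtain d where d: "DERIV g x :> d" "d \<le> - \<gamma> * g x" using der[of x] x by auto
    have "DERIV h x :> d * exp (\<gamma> * x) + g x * (exp (\<gamma> * x) * \<gamma>)"
      unfolding h_def using d(1) by (auto intro!: derivative_eq_intros)
    moreover have "d * exp (\<gamma> * x) + g x * (exp (\<gamma> * x) * \<gamma>) \<le> 0"
    proof -
      have "d * exp (\<gamma> * x) \<le> (- \<gamma> * g x) * exp (\<gamma> * x)" using d(2) by (intro mult_right_mono) auto
      thus ?thesis by (simp add: algebra_simps)
    qed
    ultimately show "\<exists>y. DERIV h x :> y \<and> y \<le> 0" by blast
  next
    show "continuous_on {t1..t} h" unfolding h_def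
      by (intro continuous_intros continuous_on_subset[OF cont]) auto
  qed
  hence "g t * exp (\<gamma> * t) \<le> g t1 * exp (\<gamma> * t1)" unfolding h_def .
  hence "g t \<le> g t1 * exp (\<gamma> * t1) / exp (\<gamma> * t)" by (simp add: field_simps)
  also have "\<dots> = g t1 * exp (\<gamma> * t1 - \<gamma> * t)" by (simp add: exp_diff)
  also have "\<gamma> * t1 - \<gamma> * t = - \<gamma> * (t - t1)" by (simp add: algebra_simps)
  finally show ?thesis .
qed



lemma sol_cont:
  assumes "is_solution G x0 \<psi>"
  shows "continuous_on {0..} \<psi>"
proof -
  have "continuous (at t within {0..}) \<psi>" if "t \<in> {0..}" for t
    using assms that unfolding is_solution_def by (auto intro: has_vector_derivative_continuous)
  thus ?thesis by (simp add: continuous_on_eq_continuous_within)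
qed

lemma traj_cont:
  fixes E P :: "real^'n^'n"
  assumes "is_solution G x0 \<psi>"
  shows "continuous_on {0..} (\<lambda>t. lyap_v E P (\<psi> t))"
proof -
  have "continuous (at t within {0..}) (\<lambda>t. lyap_v E P (\<psi> t))" if "t \<in> {0..}" for t
  proof -
    have "(\<psi> has_vector_derivative G (\<psi> t)) (at t within {0..})" using assms that unfolding is_solution_def by auto
    from v_deriv[OF this, of E P] show ?thesis by (rule DERIV_continuous)
  qed
  thus ?thesis by (simp add: continuous_on_eq_continuous_within)
qed

lemma traj_deriv_F:
  fixes E A P :: "real^'n^'n" and H :: "real^('n\<times>'n)^'n"
  assumes "is_solution G x0 \<psi>" "t \<ge> 0" "G (\<psi> t) = qrhs E A H (\<psi> t)"
  shows "((\<lambda>t. lyap_v E P (\<psi> t)) has_real_derivative lyap_vdot E A H P (\<psi> t)) (at t within {0..})"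
proof -
  have "(\<psi> has_vector_derivative qrhs E A H (\<psi> t)) (at t within {0..})"
    using assms unfolding is_solution_def by auto
  thus ?thesis by (rule v_deriv_sol)
qed

lemma at_pos:
  fixes t :: real
  assumes "t > 0" "(f has_real_derivative d) (at t within {0..})"
  shows "DERIV f t :> d"
proof -
  have "at t within {0..} = at t within UNIV"
    by (rule at_within_nhd[of t "{0<..}"]) (use assms in auto)
  thus ?thesis using assms by simp
qed

lemma traj_stab:
  fixes E A P :: "real^'n^'n" and H :: "real^('n\<times>'n)^'n"
  assumes sol: "is_solution G x0 \<psi>"
    and GF: "\<And>x. lyap_v E P x \<le> K \<Longrightarrow> G x = qrhs E A H x"
    and neg: "\<And>x. lyap_v E P x < K \<Longrightarrow> lyap_vdot E A H P x \<le> 0"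
    and x0: "lyap_v E P x0 < K"
  shows "\<forall>t\<ge>0. lyap_v E P (\<psi> t) \<le> lyap_v E P x0"
proof -
  have "\<forall>t\<ge>0. lyap_v E P (\<psi> t) \<le> lyap_v E P (\<psi> 0)"
  proof (rule inv_lemma[where K=K])
    show "continuous_on {0..} (\<lambda>t. lyap_v E P (\<psi> t))" by (rule traj_cont[OF sol])
    fix t :: real assume t: "t > 0" "lyap_v E P (\<psi> t) < K"
    have "DERIV (\<lambda>t. lyap_v E P (\<psi> t)) t :> lyap_vdot E A H P (\<psi> t)"
      using at_pos[OF t(1) traj_deriv_F[OF sol _ GF]] t by auto
    thus "\<exists>d. DERIV (\<lambda>t. lyap_v E P (\<psi> t)) t :> d \<and> d \<le> 0" using neg t(2) by blast
  qed (use sol x0 in \<open>auto simp: is_solution_def\<close>)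
  thus ?thesis using sol unfolding is_solution_def by simp
qed

lemma traj_D:
  fixes E A P :: "real^'n^'n" and H :: "real^('n\<times>'n)^'n"
  assumes sol: "is_solution G x0 \<psi>"
    and GF: "\<And>x. lyap_v E P x \<le> K \<Longrightarrow> G x = qrhs E A H x"
    and neg: "\<And>x. lyap_v E P x < K \<Longrightarrow> lyap_vdot E A H P x \<le> 0"
    and x0: "lyap_v E P x0 \<le> K" "lyap_vdot E A H P x0 < 0"
  shows "\<exists>t1>0. lyap_v E P (\<psi> t1) < K \<and> (\<forall>t\<ge>0. lyap_v E P (\<psi> t) \<le> K)
           \<and> (\<forall>t\<ge>t1. lyap_v E P (\<psi> t) \<le> lyap_v E P (\<psi> t1))"
proof -
  define g where "g t = lyap_v E P (\<psi> t)" for t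
  have p0: "\<psi> 0 = x0" using sol unfolding is_solution_def by simp
  have "(g has_real_derivative lyap_vdot E A H P x0) (at 0 within {0..})"
    unfolding g_def using traj_deriv_F[OF sol, of 0] GF[OF x0(1)] p0 by simp
  from has_real_derivative_neg_dec_right[OF this x0(2)]
  obtain d where d: "d > 0" "\<And>h. h > 0 \<Longrightarrow> h < d \<Longrightarrow> g h < g 0" by auto
  define t1 where "t1 = d / 2"
  have t1: "t1 > 0" "t1 < d" using d unfolding t1_def by auto
  have g0: "g 0 \<le> K" unfolding g_def using p0 x0 by simp
  have gt1: "g t1 < K" using d(2)[OF t1] g0 by simp
  have after: "\<forall>t\<ge>t1. g t \<le> g t1"
  proof (rule inv_lemma[where K=K])
    show "continuous_on {0..} g" unfolding g_def by (rule traj_cont[OF sol])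
    fix t :: real assume t: "t > 0" "g t < K"
    have "DERIV g t :> lyap_vdot E A H P (\<psi> t)"
      using at_pos[OF t(1) traj_deriv_F[OF sol _ GF]] t unfolding g_def by auto
    thus "\<exists>d. DERIV g t :> d \<and> d \<le> 0" using neg t(2) unfolding g_def by blast
  qed (use t1 gt1 in auto)
  have "g t \<le> K" if "t \<ge> 0" for t
  proof (cases "t \<ge> t1")
    case True thus ?thesis using after gt1 by force
  next
    case False
    show ?thesis
    proof (cases "t = 0")
      case True thus ?thesis using g0 by simp
    next
      case False
      hence "g t < g 0" using d(2)[of t] \<open>\<not> t1 \<le> t\<close> t1 that by auto
      thus ?thesis using g0 by simp
    qed
  qed
  thus ?thesis using t1 gt1 after unfolding g_def by blast
qed

lemma traj_conv:
  fixes E A P :: "real^'n^'n" and H :: "real^('n\<times>'n)^'n"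
  assumes sol: "is_solution G x0 \<psi>"
    and t1: "t1 \<ge> 0" and stay: "\<And>t. t \<ge> t1 \<Longrightarrow> lyap_v E P (\<psi> t) \<le> c"
    and GF: "\<And>x. lyap_v E P x \<le> c \<Longrightarrow> G x = qrhs E A H x"
    and dec: "\<And>x. lyap_v E P x \<le> c \<Longrightarrow> lyap_vdot E A H P x \<le> - \<gamma> * lyap_v E P x"
    and lam: "lam > 0" "\<And>x. lam * (norm x)^2 \<le> lyap_v E P x"
    and \<gamma>: "\<gamma> > 0"
  shows "(\<psi> \<longlongrightarrow> 0) at_top"
proof -
  define g where "g t = lyap_v E P (\<psi> t)" for t
  have bound: "g t \<le> g t1 * exp (- \<gamma> * (t - t1))" if "t \<ge> t1" for t
  proof (rule exp_decay[OF _ _ that])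
    show "continuous_on {t1..} g" unfolding g_def by (rule continuous_on_subset[OF traj_cont[OF sol]]) (use t1 in auto)
    fix s :: real assume s: "s > t1"
    have "DERIV g s :> lyap_vdot E A H P (\<psi> s)"
      using at_pos[of s, OF _ traj_deriv_F[OF sol _ GF]] s t1 stay[of s] unfolding g_def by auto
    thus "\<exists>d. DERIV g s :> d \<and> d \<le> - \<gamma> * g s" using dec[OF stay[of s]] s unfolding g_def by auto
  qed
  have "eventually (\<lambda>t. norm (\<psi> t) \<le> sqrt (g t1 / lam * exp (- \<gamma> * (t - t1)))) at_top"
    using eventually_ge_at_top[of t1]
  proof eventually_elim
    case (elim t)
    have "lam * (norm (\<psi> t))^2 \<le> g t1 * exp (- \<gamma> * (t - t1))"
      using lam(2)[of "\<psi> t"] bound[OF elim] unfolding g_def by linarith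
    hence "(norm (\<psi> t))^2 \<le> g t1 / lam * exp (- \<gamma> * (t - t1))" using lam(1) by (simp add: field_simps)
    thus ?case by (rule real_le_rsqrt)
  qed
  moreover have "((\<lambda>t. sqrt (g t1 / lam * exp (- \<gamma> * (t - t1)))) \<longlongrightarrow> 0) at_top"
  proof -
    have "((\<lambda>t. exp (- \<gamma> * (t - t1))) \<longlongrightarrow> 0) at_top" using \<gamma> by real_asymp
    hence "((\<lambda>t. g t1 / lam * exp (- \<gamma> * (t - t1))) \<longlongrightarrow> g t1 / lam * 0) at_top" by (rule tendsto_mult_left)
    hence "((\<lambda>t. sqrt (g t1 / lam * exp (- \<gamma> * (t - t1)))) \<longlongrightarrow> sqrt (g t1 / lam * 0)) at_top" by (rule tendsto_real_sqrt)
    thus ?thesis by simp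
  qed
  ultimately show ?thesis by (rule Lim_null_comparison)
qed



lemma exists_G:
  fixes E A P :: "real^'n^'n" and H :: "real^('n\<times>'n)^'n"
  assumes lam: "lam > 0" "\<And>x. lam * (norm x)^2 \<le> lyap_v E P x" and K: "K \<ge> 0"
  shows "\<exists>G. (\<forall>x. lyap_v E P x \<le> K \<longrightarrow> G x = qrhs E A H x) \<and> (\<exists>L>0. \<forall>x y. norm (G x - G y) \<le> L * norm (x - y))"
proof -
  define R where "R = sqrt (K / lam)"
  have R: "R \<ge> 0" unfolding R_def using lam K by simp
  obtain L where L: "L > 0" "\<And>x y. x \<in> cball 0 R \<Longrightarrow> y \<in> cball 0 R \<Longrightarrow> norm (qrhs E A H x - qrhs E A H y) \<le> L * norm (x - y)"
    using F_lipschitz[OF R, of E A H] by blast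
  define cp where "cp x = closest_point (cball (0::real^'n) R) x" for x
  have cpin: "cp x \<in> cball 0 R" for x unfolding cp_def by (rule closest_point_in_set) (use R in auto)
  have cplip: "norm (cp x - cp y) \<le> norm (x - y)" for x y
    unfolding cp_def dist_norm[symmetric] by (rule closest_point_lipschitz) (use R in auto)
  define G where "G x = qrhs E A H (cp x)" for x
  have "norm (G x - G y) \<le> L * norm (x - y)" for x y
  proof -
    have "norm (G x - G y) \<le> L * norm (cp x - cp y)" unfolding G_def by (rule L(2)[OF cpin cpin])
    also have "\<dots> \<le> L * norm (x - y)" using L(1) cplip by (simp add: mult_left_mono)
    finally show ?thesis .
  qed
  moreover have "G x = qrhs E A H x" if "lyap_v E P x \<le> K" for x
  proof -
    have "lam * (norm x)^2 \<le> K" using lam(2)[of x] that by linarith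
    hence "(norm x)^2 \<le> K / lam" using lam(1) by (simp add: field_simps)
    hence "norm x \<le> R" unfolding R_def by (rule real_le_rsqrt)
    hence "cp x = x" unfolding cp_def by (intro closest_point_self) simp
    thus ?thesis unfolding G_def by simp
  qed
  ultimately show ?thesis using L(1) by blast
qed

lemma kron00: "kron 0 0 = 0"
  by (simp add: kron_def vec_eq_iff)

lemma F0: "qrhs E A H 0 = 0"
  by (simp add: qrhs_def kron00)

lemma Vd0: "lyap_vdot E A H P 0 = 0"
  by (simp add: lyap_vdot_def F0)

theorem proposition3p1:
  fixes E A P :: "real^'n^'n" and H :: "real^('n\<times>'n)^'n" and Qf :: "real^'n^'m"
  assumes "invertible E"
    and "\<And>x1 x2. H *v kron x1 x2 = H *v kron x2 x1"
    and "hurwitz A"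
    and "pos_def P"
    and "pos_def (transpose Qf ** Qf)"
    and "transpose A ** P ** E + transpose E ** P ** A + transpose Qf ** Qf = 0"
  shows "stable_equilibrium_0 (qrhs E A H)
     \<and> D_set E A H P ((sigma_min Qf)\<^sup>2 / (2 * spec_norm H * sqrt (spec_norm P)))
         \<subseteq> domain_of_attraction (qrhs E A H)"
proof -
  note E = assms(1) and pd = assms(4) and pdQ = assms(5) and ly = assms(6)
  define F where "F = qrhs E A H"
  define V where "V = lyap_v E P"
  define Vd where "Vd = lyap_vdot E A H P"
  define Q where "Q = transpose Qf ** Qf"
  define \<sigma> where "\<sigma> = sigma_min Qf"
  define \<alpha> where "\<alpha> = 2 * spec_norm H * sqrt (spec_norm P)"
  obtain lam C where lam: "lam > 0" "C > 0" and VB: "\<And>x. lam * (norm x)^2 \<le> V x" "\<And>x. V x \<le> C * (norm x)^2"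
    using v_bounds[OF E pd] unfolding V_def by blast
  obtain mQ where mQ: "mQ > 0" "\<And>x. mQ * (norm x)^2 \<le> x \<bullet> (Q *v x)"
    using posdef_min[OF pdQ] unfolding Q_def by blast
  have sig: "\<sigma> \<ge> 0" "\<And>x. \<sigma>^2 * (norm x)^2 \<le> x \<bullet> (Q *v x)"
    using sigma_bound[OF pdQ] unfolding \<sigma>_def Q_def by auto
  have \<alpha>0: "\<alpha> \<ge> 0" unfolding \<alpha>_def using spec_norm_nonneg[of H] spec_norm_nonneg[of P] by simp
  have KB: "Vd x \<le> (norm x)^2 * (\<alpha> * sqrt (V x)) - x \<bullet> (Q *v x)" for x
    using vdot_bound[OF E pd ly, of H x] unfolding Vd_def V_def Q_def \<alpha>_def by (simp add: ac_simps)
  have Vnn: "V x \<ge> 0" for x using VB(1)[of x] lam(1) by (meson order_trans zero_le_mult_iff zero_le_power2 less_imp_le)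
  have Vz: "x = 0" if "V x \<le> 0" for x
  proof -
    have "lam * (norm x)^2 \<le> 0" using VB(1)[of x] that by linarith
    hence "(norm x)^2 \<le> 0" using lam(1) by (simp add: mult_le_0_iff)
    thus ?thesis by simp
  qed
  have stable: "stable_equilibrium_0 F"
    unfolding stable_equilibrium_0_def
  proof (intro conjI allI impI)
    show "F 0 = 0" unfolding F_def by (rule F0)
    fix \<epsilon> :: real assume \<epsilon>: "\<epsilon> > 0"
    define c where "c = min (lam * \<epsilon>^2 / 2) ((mQ / (\<alpha> + 1))^2)"
    have c: "c > 0" unfolding c_def using lam \<epsilon> mQ \<alpha>0 by auto
    have c1: "c \<le> lam * \<epsilon>^2 / 2" "c \<le> (mQ / (\<alpha> + 1))^2" unfolding c_def by auto
    have neg: "Vd x \<le> 0" if "V x < c" for x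
    proof -
      have "V x \<le> (mQ / (\<alpha> + 1))^2" using that c1 by linarith
      hence "sqrt (V x) \<le> sqrt ((mQ / (\<alpha> + 1))^2)" by (rule real_sqrt_le_mono)
      also have "\<dots> = mQ / (\<alpha> + 1)" using mQ \<alpha>0 by simp
      finally have s: "sqrt (V x) \<le> mQ / (\<alpha> + 1)" .
      have "\<alpha> * sqrt (V x) \<le> \<alpha> * (mQ / (\<alpha> + 1))" using s \<alpha>0 by (rule mult_left_mono)
      also have "\<dots> \<le> mQ" using \<alpha>0 mQ by (simp add: field_simps)
      finally have "(norm x)^2 * (\<alpha> * sqrt (V x)) \<le> (norm x)^2 * mQ" by (simp add: mult_left_mono)
      thus ?thesis using KB[of x] mQ(2)[of x] by (simp add: ac_simps)
    qed
    define \<delta> where "\<delta> = sqrt (c / C)"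
    have \<delta>: "\<delta> > 0" unfolding \<delta>_def using c lam by simp
    show "\<exists>\<delta>>0. \<forall>x0. norm x0 < \<delta> \<longrightarrow> (\<exists>\<phi>. is_solution F x0 \<phi>) \<and> (\<forall>\<phi>. is_solution F x0 \<phi> \<longrightarrow> (\<forall>t\<ge>0. norm (\<phi> t) < \<epsilon>))"
    proof (rule exI[of _ \<delta>], rule conjI[OF \<delta>], intro allI impI)
      fix x0 :: "real^'n" assume x0: "norm x0 < \<delta>"
      have Vx0: "V x0 < c"
      proof -
        have "(norm x0)^2 < \<delta>^2" using x0 by (simp add: power_strict_mono)
        also have "\<delta>^2 = c / C" unfolding \<delta>_def using c lam by simp
        finally have "C * (norm x0)^2 < c" using lam by (simp add: field_simps)
        thus ?thesis using VB(2)[of x0] by linarith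
      qed
      obtain G where G: "\<And>x. V x \<le> c \<Longrightarrow> G x = F x" and "\<exists>L>0. \<forall>x y. norm (G x - G y) \<le> L * norm (x - y)"
        using exists_G[OF lam(1) VB(1)[unfolded V_def] less_imp_le[OF c], of A H] unfolding V_def F_def by blast
      then obtain L where "L > 0" "\<And>x y. norm (G x - G y) \<le> L * norm (x - y)" by blast
      from picard[OF this] obtain \<psi> where \<psi>: "is_solution G x0 \<psi>" by blast
      have st: "\<forall>t\<ge>0. V (\<psi> t) \<le> V x0"
        using traj_stab[OF \<psi>, of E P c A H] G neg Vx0 unfolding V_def Vd_def F_def by auto
      have "is_solution F x0 \<psi>"
        using \<psi> G st Vx0 unfolding is_solution_def by (metis less_imp_le order_trans)
      hence ex: "\<exists>\<phi>. is_solution F x0 \<phi>" by blast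
      have all: "\<forall>\<phi>. is_solution F x0 \<phi> \<longrightarrow> (\<forall>t\<ge>0. norm (\<phi> t) < \<epsilon>)"
      proof (intro allI impI)
        fix \<phi> and t :: real assume \<phi>: "is_solution F x0 \<phi>" and t: "t \<ge> 0"
        have st: "\<forall>t\<ge>0. V (\<phi> t) \<le> V x0"
          using traj_stab[OF \<phi>[unfolded F_def], of E P c] neg Vx0 unfolding V_def Vd_def by auto
        hence "lam * (norm (\<phi> t))^2 < lam * \<epsilon>^2 / 2" using t VB(1)[of "\<phi> t"] Vx0 c1 by fastforce
        hence "2 * (norm (\<phi> t))^2 < \<epsilon>^2" using lam \<epsilon> by (simp add: field_simps)
        moreover have "0 \<le> (norm (\<phi> t))^2" by simp
        ultimately have "(norm (\<phi> t))^2 < \<epsilon>^2" by linarith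
        thus "norm (\<phi> t) < \<epsilon>" using \<epsilon> by (simp add: power_less_imp_less_base)
      qed
      show "(\<exists>\<phi>. is_solution F x0 \<phi>) \<and> (\<forall>\<phi>. is_solution F x0 \<phi> \<longrightarrow> (\<forall>t\<ge>0. norm (\<phi> t) < \<epsilon>))"
        using ex all by blast
    qed
  qed
  define \<rho> where "\<rho> = \<sigma>^2 / \<alpha>"
  have D: "D_set E A H P \<rho> \<subseteq> domain_of_attraction F"
  proof
    fix x0 assume "x0 \<in> D_set E A H P \<rho>"
    hence x0: "V x0 \<le> \<rho>^2" "Vd x0 < 0" unfolding D_set_def V_def Vd_def by auto
    have "x0 \<noteq> 0" using x0(2) Vd0[of E A H P] unfolding Vd_def by auto
    have \<alpha>pos: "\<alpha> > 0"
    proof (rule ccontr)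
      assume "\<not> \<alpha> > 0"
      hence "\<alpha> = 0" using \<alpha>0 by simp
      hence "\<rho> = 0" unfolding \<rho>_def by simp
      hence "x0 = 0" using Vz x0(1) by simp
      thus False using \<open>x0 \<noteq> 0\<close> by simp
    qed
    have \<rho>0: "\<rho> \<ge> 0" unfolding \<rho>_def using \<alpha>pos by simp
    have \<alpha>\<rho>: "\<alpha> * \<rho> = \<sigma>^2" unfolding \<rho>_def using \<alpha>pos by simp
    have KB2: "Vd x \<le> (norm x)^2 * (\<alpha> * sqrt (V x) - \<alpha> * \<rho>)" for x
      using KB[of x] sig(2)[of x] \<alpha>\<rho> by (simp add: algebra_simps)
    have neg: "Vd x \<le> 0" if "V x < \<rho>^2" for x
    proof -
      have "sqrt (V x) < sqrt (\<rho>^2)" using that by (rule real_sqrt_less_mono)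
      hence "sqrt (V x) \<le> \<rho>" using \<rho>0 by simp
      hence "\<alpha> * sqrt (V x) - \<alpha> * \<rho> \<le> 0" using \<alpha>pos by (simp add: mult_left_mono)
      hence "(norm x)^2 * (\<alpha> * sqrt (V x) - \<alpha> * \<rho>) \<le> 0" by (simp add: mult_nonneg_nonpos)
      thus ?thesis using KB2[of x] by linarith
    qed
    have ex: "\<exists>\<phi>. is_solution F x0 \<phi>"
    proof -
      obtain G where G: "\<And>x. V x \<le> \<rho>^2 \<Longrightarrow> G x = F x" and "\<exists>L>0. \<forall>x y. norm (G x - G y) \<le> L * norm (x - y)"
        using exists_G[OF lam(1) VB(1)[unfolded V_def], of "\<rho>^2" A H] unfolding V_def F_def by auto
      then obtain L where "L > 0" "\<And>x y. norm (G x - G y) \<le> L * norm (x - y)" by blast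
      from picard[OF this] obtain \<psi> where \<psi>: "is_solution G x0 \<psi>" by blast
      obtain t1 where "\<forall>t\<ge>0. V (\<psi> t) \<le> \<rho>^2"
        using traj_D[OF \<psi>, of E P "\<rho>^2" A H] G neg x0 unfolding V_def Vd_def F_def by auto
      hence "is_solution F x0 \<psi>"
        using \<psi> G unfolding is_solution_def by metis
      thus ?thesis by blast
    qed
    have conv: "(\<phi> \<longlongrightarrow> 0) at_top" if \<phi>: "is_solution F x0 \<phi>" for \<phi>
    proof -
      obtain t1 where t1: "t1 > 0" "V (\<phi> t1) < \<rho>^2" "\<forall>t\<ge>t1. V (\<phi> t) \<le> V (\<phi> t1)"
        using traj_D[OF \<phi>[unfolded F_def], of E P "\<rho>^2" A H] neg x0 unfolding V_def Vd_def by auto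
      define c1 where "c1 = V (\<phi> t1)"
      have sc: "sqrt c1 < \<rho>"
      proof -
        have "sqrt c1 < sqrt (\<rho>^2)" using t1(2) unfolding c1_def by (rule real_sqrt_less_mono)
        thus ?thesis using \<rho>0 by simp
      qed
      define \<beta> where "\<beta> = \<alpha> * (\<rho> - sqrt c1)"
      have \<beta>: "\<beta> > 0" unfolding \<beta>_def using \<alpha>pos sc by simp
      define \<gamma> where "\<gamma> = \<beta> / C"
      have \<gamma>: "\<gamma> > 0" unfolding \<gamma>_def using \<beta> lam by simp
      have dec: "Vd x \<le> - \<gamma> * V x" if "V x \<le> c1" for x
      proof -
        have "sqrt (V x) \<le> sqrt c1" using that by simp
        hence "\<alpha> * sqrt (V x) - \<alpha> * \<rho> \<le> - \<beta>" unfolding \<beta>_def using \<alpha>pos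
          by (simp add: algebra_simps mult_left_mono)
        hence "(norm x)^2 * (\<alpha> * sqrt (V x) - \<alpha> * \<rho>) \<le> (norm x)^2 * (- \<beta>)" by (rule mult_left_mono) simp
        hence 1: "Vd x \<le> - \<beta> * (norm x)^2" using KB2[of x] by (simp add: ac_simps)
        have "\<gamma> * V x \<le> \<gamma> * (C * (norm x)^2)" using VB(2)[of x] \<gamma> by (simp add: mult_left_mono)
        also have "\<dots> = \<beta> * (norm x)^2" unfolding \<gamma>_def using lam by simp
        finally show ?thesis using 1 by simp
      qed
      show ?thesis
      proof (rule traj_conv[where c=c1 and \<gamma>=\<gamma> and lam=lam and E=E and P=P, OF \<phi>[unfolded F_def]])
        show "0 \<le> t1" using t1 by simp
        show "\<And>t. t1 \<le> t \<Longrightarrow> lyap_v E P (\<phi> t) \<le> c1" using t1 unfolding c1_def V_def by auto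
        show "\<And>x. lyap_v E P x \<le> c1 \<Longrightarrow> lyap_vdot E A H P x \<le> - \<gamma> * lyap_v E P x"
          using dec unfolding V_def Vd_def by auto
        show "\<And>x. lam * (norm x)\<^sup>2 \<le> lyap_v E P x" using VB(1) unfolding V_def .
      qed (use lam \<gamma> in auto)
    qed
    show "x0 \<in> domain_of_attraction F"
      unfolding domain_of_attraction_def using ex conv by blast
  qed
  show ?thesis using stable D unfolding F_def \<rho>_def \<sigma>_def \<alpha>_def by simp
qed

end
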